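(* Suppose $p=2p_1$, $q=2q_1$, $r=2r_1$ are all even, and let $H$ be the quotient of $W(p,q,r)$ by the normal subgroup generated by $\big((s_1s_3)^{q_1}(s_1s_2)^{p_1}(s_2s_3)^{r_1}\big)^2$. Then for every reflection representation $R$ of $W(p,q,r)$ (any admissible parameters) with $\Delta=0$, $R$ factors through $H$; in particular $G=R(W)$ is isomorphic to a quotient of $H$.
   Context: Setting. Let $p,q,r\ge 3$ be integers and $W=W(p,q,r)$ the Coxeter group with generators $s_1,s_2,s_3$ and relations $s_i^2=1$, $(s_1s_2)^p=(s_1s_3)^q=(s_2s_3)^r=1$. Let $\alpha=4\cos^2(\pi k_1/p)$, $\beta=4\cos^2(\pi k_2/q)$, $\gamma=4\cos^2(\pi k_3/r)$ with $\gcd(k_1,p)=\gcd(k_2,q)=\gcd(k_3,r)=1$ (so $0<\alpha,\beta,\gamma<4$), and let $l,m\in\mathbb{C}$ with $lm=\gamma$. Let $K\subset\mathbb{C}$ be a field containing $\alpha,\beta,\gamma,l,m$, and $M$ a $3$-dimensional $K$-vector space with basis $(a_1,a_2,a_3)$. The reflection representation $R:W\to GL(M)$ with parameters $(\alpha,\beta,\gamma;l,m)$ is defined by: for $x=\lambda_1a_1+\lambda_2a_2+\lambda_3a_3$, $R(s_1)x=x-(2\lambda_1-\alpha\lambda_2-\beta\lambda_3)a_1$, $R(s_2)x=x-(-\lambda_1+2\lambda_2-l\lambda_3)a_2$, $R(s_3)x=x-(-\lambda_1-m\lambda_2+2\lambda_3)a_3$. Put $G=R(W)$ and write $s_i$ for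 $R(s_i)$. Let $\Delta=8-2\alpha-2\beta-2\gamma-(\alpha l+\beta m)$; $R$ is reducible iff $\Delta=0$. *)

theory Defs
  imports "HOL-Analysis.Analysis"
begin

text \<open>The reflection representation with parameters (alpha, beta, gamma; l, m) on
  M = K^3 with basis a_1, a_2, a_3, realised on coordinate vectors in complex^3
  (K is a subfield of the complex numbers).\<close>

definition refl_s1 :: "complex \<Rightarrow> complex \<Rightarrow> complex^3 \<Rightarrow> complex^3" where
  "refl_s1 \<alpha> \<beta> x = x - (2 * x$1 - \<alpha> * x$2 - \<beta> * x$3) *s axis 1 1"

definition refl_s2 :: "complex \<Rightarrow> complex^3 \<Rightarrow> complex^3" where
  "refl_s2 l x = x - (- x$1 + 2 * x$2 - l * x$3) *s axis 2 1"

definition refl_s3 :: "complex \<Rightarrow> complex^3 \<Rightarrow> complex^3" where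
  "refl_s3 m x = x - (- x$1 - m * x$2 + 2 * x$3) *s axis 3 1"

definition refl_Delta :: "complex \<Rightarrow> complex \<Rightarrow> complex \<Rightarrow> complex \<Rightarrow> complex \<Rightarrow> complex" where
  "refl_Delta \<alpha> \<beta> \<gamma> l m = 8 - 2*\<alpha> - 2*\<beta> - 2*\<gamma> - (\<alpha> * l + \<beta> * m)"

end

theory Submission
  imports Defs
begin

lemma pow_formula:
  fixes A :: "complex^3 \<Rightarrow> complex^3" and t :: complex and s :: "nat \<Rightarrow> complex"
  assumes add: "\<And>x y. A (x + y) = A x + A y" and sc: "\<And>c x. A (c *s x) = c *s A x"
   and cub: "\<And>x. A (A (A x)) = (t+1) *s A (A x) - (t+1) *s A x + x"
   and s0: "s 0 = -1" and s1: "s 1 = 0" and rec: "\<And>n. s (Suc (Suc n)) = t * s (Suc n) - s n"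
   and t2: "t \<noteq> 2"
  shows "(A ^^ n) x = ((1 - s (Suc n) + s n)/(2-t)) *s A (A x) + (s (Suc n) - t*((1 - s (Suc n) + s n)/(2-t))) *s A x + ((1 - s (Suc n) + s n)/(2-t) - s n) *s x"
proof (induction n)
  case 0
  show ?case using s0 s1 by (simp add: vec_eq_iff)
next
  case (Suc n)
  have t2': "2 - t \<noteq> 0" using t2 by simp
  define k where "k = (1 - s (Suc n) + s n)/(2-t)"
  have kk: "k * (2 - t) = 1 - s (Suc n) + s n" using t2' by (simp add: k_def)
  define k' where "k' = (1 - s (Suc (Suc n)) + s (Suc n))/(2-t)"
  have kk': "k' * (2 - t) = 1 - (t * s (Suc n) - s n) + s (Suc n)" using t2' by (simp add: k'_def rec)
  have e1: "k*(t+1) + (s (Suc n) - t*k) = k'"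
  proof -
    have "(k*(t+1) + (s (Suc n) - t*k)) * (2-t) = k' * (2-t)" using kk kk' by algebra
    then show ?thesis using t2' by simp
  qed
  have e2: "k - s n - k*(t+1) = s (Suc (Suc n)) - t*k'"
  proof -
    have "(k - s n - k*(t+1)) * (2-t) = (s (Suc (Suc n)) - t*k') * (2-t)" unfolding rec using kk kk' by algebra
    then show ?thesis using t2' by simp
  qed
  have e3: "k = k' - s (Suc n)"
  proof -
    have "k * (2-t) = (k' - s (Suc n)) * (2-t)" using kk kk' by algebra
    then show ?thesis using t2' by simp
  qed
  have "(A ^^ Suc n) x = A ((A ^^ n) x)" by simp
  also have "\<dots> = k *s A (A (A x)) + (s (Suc n) - t*k) *s A (A x) + (k - s n) *s A x"
    unfolding Suc k_def by (simp only: add sc)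
  also have "\<dots> = (k*(t+1) + (s (Suc n) - t*k)) *s A (A x) + (k - s n - k*(t+1)) *s A x + k *s x"
    unfolding cub by (simp add: vec_eq_iff algebra_simps)
  also have "\<dots> = k' *s A (A x) + (s (Suc (Suc n)) - t*k') *s A x + (k' - s (Suc n)) *s x"
    using e1 e2 e3 by simp
  finally show ?case unfolding k'_def .
qed

lemma trig_facts:
  fixes k :: int and n p :: nat
  assumes n2: "n \<ge> 2" and pn: "p = 2*n" and g: "gcd k (int p) = 1"
  shows "sin (pi * real_of_int k / real n) \<noteq> 0"
    and "sin (real n * (pi * real_of_int k / real n)) = 0"
    and "sin ((real n - 1) * (pi * real_of_int k / real n)) = sin (pi * real_of_int k / real n)"
    and "4 * (cos (pi * real_of_int k / real p))\<^sup>2 - 2 = 2 * cos (pi * real_of_int k / real n)"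
proof -
  define th where "th = pi * real_of_int k / real n"
  have npos: "real n > 0" using n2 by simp
  show "sin (pi * real_of_int k / real n) \<noteq> 0"
  proof
    assume "sin (pi * real_of_int k / real n) = 0"
    then obtain i :: int where i: "pi * real_of_int k / real n = of_int i * pi"
      by (auto simp: sin_zero_iff_int2)
    then have "real_of_int k = real_of_int i * real n" using npos by (simp add: field_simps)
    then have "k = i * int n" by (metis of_int_eq_iff of_int_mult of_int_of_nat_eq)
    then have d1: "int n dvd k" by simp
    have d2: "int n dvd int p" using pn by simp
    have "int n dvd gcd k (int p)" using d1 d2 by simp
    then have "int n dvd 1" using g by simp
    then show False using n2 by simp
  qed
  have nth: "real n * th = real_of_int k * pi" unfolding th_def using npos by (simp add: field_simps)
  show "sin (real n * (pi * real_of_int k / real n)) = 0"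
    using nth unfolding th_def by (simp add: sin_zero_iff_int2)
  have odd: "odd k"
  proof
    assume "even k"
    then have "2 dvd gcd k (int p)" using pn by simp
    then show False using g by simp
  qed
  then obtain j where j: "k = 2*j+1" by (metis oddE)
  have ck: "cos (real_of_int k * pi) = -1"
  proof -
    have "real_of_int k * pi = (2*pi) * of_int j + pi" using j by (simp add: algebra_simps)
    then show ?thesis by (simp add: cos_add)
  qed
  have sk: "sin (real_of_int k * pi) = 0" by (simp add: sin_zero_iff_int2)
  have "(real n - 1) * th = real_of_int k * pi - th" using nth by (simp add: algebra_simps)
  then show "sin ((real n - 1) * (pi * real_of_int k / real n)) = sin (pi * real_of_int k / real n)"
    unfolding th_def[symmetric] by (simp add: sin_diff ck sk)
  have "pi * real_of_int k / real n = 2 * (pi * real_of_int k / real p)" using pn npos by (simp add: field_simps)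
  then show "4 * (cos (pi * real_of_int k / real p))\<^sup>2 - 2 = 2 * cos (pi * real_of_int k / real n)"
    using cos_double_cos[of "pi * real_of_int k / real p"] by simp
qed

lemma pow_half:
  fixes A :: "complex^3 \<Rightarrow> complex^3" and t :: complex and k :: int and n p :: nat
  assumes add: "\<And>x y. A (x + y) = A x + A y" and sc: "\<And>c x. A (c *s x) = c *s A x"
   and cub: "\<And>x. A (A (A x)) = (t+1) *s A (A x) - (t+1) *s A x + x"
   and n2: "n \<ge> 2" and pn: "p = 2*n" and g: "gcd k (int p) = 1"
   and tdef: "t = complex_of_real (4 * (cos (pi * real_of_int k / real p))\<^sup>2) - 2"
  shows "(A ^^ n) x = (2/(2-t)) *s A (A x) - (2*t/(2-t)) *s A x + (2/(2-t) - 1) *s x"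
proof -
  define th where "th = pi * real_of_int k / real n"
  note tf = trig_facts[OF n2 pn g, folded th_def]
  have tc: "t = complex_of_real (2 * cos th)" using tf(4) tdef
    by (metis of_real_diff of_real_numeral add_diff_cancel diff_add_cancel)
  define s where "s j = complex_of_real (sin ((real j - 1) * th) / sin th)" for j :: nat
  have s0: "s 0 = -1" using tf(1) by (simp add: s_def)
  have s1: "s 1 = 0" by (simp add: s_def)
  have rec: "s (Suc (Suc j)) = t * s (Suc j) - s j" for j
  proof -
    have "sin ((real j + 1) * th) = 2 * cos th * sin (real j * th) - sin ((real j - 1) * th)"
      using sin_add[of "real j * th" th] sin_diff[of "real j * th" th]
      by (simp add: algebra_simps)
    then have "sin ((real j + 1) * th) / sin th = 2 * cos th * (sin (real j * th) / sin th) - sin ((real j - 1) * th) / sin th"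
      by (simp add: diff_divide_distrib)
    then show ?thesis unfolding s_def tc
      by (simp add: add.commute)
  qed
  have t2: "t \<noteq> 2"
  proof
    assume "t = 2"
    then have "complex_of_real (2 * cos th) = complex_of_real 2" unfolding tc by simp
    then have "2 * cos th = 2" using of_real_eq_iff by blast
    then have "cos th = 1" by simp
    then have "sin th = 0" using sin_cos_squared_add[of th] by simp
    then show False using tf(1) by simp
  qed
  have sn1: "s (Suc n) = 0" unfolding s_def using tf(2) by simp
  have sn: "s n = 1" unfolding s_def using tf(3) tf(1) by simp
  show ?thesis using pow_formula[OF add sc cub s0 s1 rec t2, of n x] unfolding sn1 sn
    by (simp add: field_simps)
qed

lemma s1c: "refl_s1 a b x $ 1 = - x$1 + a * x$2 + b * x$3" "refl_s1 a b x $ 2 = x$2" "refl_s1 a b x $ 3 = x$3"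
  by (simp_all add: refl_s1_def axis_def)
lemma s2c: "refl_s2 l x $ 1 = x$1" "refl_s2 l x $ 2 = x$1 - x$2 + l * x$3" "refl_s2 l x $ 3 = x$3"
  by (simp_all add: refl_s2_def axis_def)
lemma s3c: "refl_s3 m x $ 1 = x$1" "refl_s3 m x $ 2 = x$2" "refl_s3 m x $ 3 = x$1 + m * x$2 - x$3"
  by (simp_all add: refl_s3_def axis_def)

lemmas sc = s1c s2c s3c

lemma vec3_eq: "(x::complex^3) = y \<longleftrightarrow> x$1 = y$1 \<and> x$2 = y$2 \<and> x$3 = y$3"
  by (simp add: vec_eq_iff forall_3)

definition D12 :: "complex \<Rightarrow> complex \<Rightarrow> complex \<Rightarrow> complex^3 \<Rightarrow> complex^3" where
  "D12 a b l x = (2 * x$3) *s (vector [a*l+2*b, b+2*l, 4-a] :: complex^3) - (4-a) *s x"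
definition D13 :: "complex \<Rightarrow> complex \<Rightarrow> complex \<Rightarrow> complex^3 \<Rightarrow> complex^3" where
  "D13 a b m x = (2 * x$2) *s (vector [2*a+b*m, 4-b, 2*m+a] :: complex^3) - (4-b) *s x"
definition D23 :: "complex \<Rightarrow> complex \<Rightarrow> complex^3 \<Rightarrow> complex^3" where
  "D23 l m x = (2 * x$1) *s (vector [4-l*m, l+2, m+2] :: complex^3) - (4-l*m) *s x"

lemma A12_props:
  fixes a b l :: complex
  defines "A \<equiv> refl_s1 a b \<circ> refl_s2 l"
  shows "A (x + y) = A x + A y" "A (c *s x) = c *s A x"
    "A (A (A x)) = ((a-2)+1) *s A (A x) - ((a-2)+1) *s A x + x"
  unfolding A_def vec3_eq by (simp_all add: sc algebra_simps)

lemma A12_sig: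
  fixes a b l :: complex
  defines "A \<equiv> refl_s1 a b \<circ> refl_s2 l"
  assumes "a \<noteq> 4"
  shows "(2/(2-(a-2))) *s A (A x) - (2*(a-2)/(2-(a-2))) *s A x + (2/(2-(a-2)) - 1) *s x =
     (1/(4-a)) *s D12 a b l x"
proof -
  have d: "4 - a \<noteq> 0" using assms by simp
  have e: "2-(a-2) = 4-a" by simp
  show ?thesis unfolding A_def vec3_eq e D12_def using d
    by (simp add: sc diff_divide_distrib[symmetric] add_divide_distrib[symmetric] divide_simps) (simp add: algebra_simps)
qed

lemma A13_props:
  fixes a b m :: complex
  defines "A \<equiv> refl_s1 a b \<circ> refl_s3 m"
  shows "A (x + y) = A x + A y" "A (c *s x) = c *s A x"
    "A (A (A x)) = ((b-2)+1) *s A (A x) - ((b-2)+1) *s A x + x"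
  unfolding A_def vec3_eq by (simp_all add: sc algebra_simps)

lemma A13_sig:
  fixes a b m :: complex
  defines "A \<equiv> refl_s1 a b \<circ> refl_s3 m"
  assumes "b \<noteq> 4"
  shows "(2/(2-(b-2))) *s A (A x) - (2*(b-2)/(2-(b-2))) *s A x + (2/(2-(b-2)) - 1) *s x =
     (1/(4-b)) *s D13 a b m x"
proof -
  have d: "4 - b \<noteq> 0" using assms by simp
  have e: "2-(b-2) = 4-b" by simp
  show ?thesis unfolding A_def vec3_eq e D13_def using d
    by (simp add: sc diff_divide_distrib[symmetric] add_divide_distrib[symmetric] divide_simps) (simp add: algebra_simps)
qed

lemma A23_props:
  fixes l m :: complex
  defines "A \<equiv> refl_s2 l \<circ> refl_s3 m"
  shows "A (x + y) = A x + A y" "A (c *s x) = c *s A x"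
    "A (A (A x)) = ((l*m-2)+1) *s A (A x) - ((l*m-2)+1) *s A x + x"
  unfolding A_def vec3_eq by (simp_all add: sc algebra_simps)

lemma A23_sig:
  fixes l m :: complex
  defines "A \<equiv> refl_s2 l \<circ> refl_s3 m"
  assumes "l*m \<noteq> 4"
  shows "(2/(2-(l*m-2))) *s A (A x) - (2*(l*m-2)/(2-(l*m-2))) *s A x + (2/(2-(l*m-2)) - 1) *s x =
     (1/(4-l*m)) *s D23 l m x"
proof -
  have d: "4 - l*m \<noteq> 0" using assms by simp
  have e: "2-(l*m-2) = 4-l*m" by simp
  show ?thesis unfolding A_def vec3_eq e D23_def using d
    by (simp add: sc diff_divide_distrib[symmetric] add_divide_distrib[symmetric] divide_simps) (simp add: algebra_simps)
qed
definition Nm :: "complex \<Rightarrow> complex \<Rightarrow> complex \<Rightarrow> complex \<Rightarrow> complex^3 \<Rightarrow> complex^3" where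
  "Nm a b l m x = vector [(64 - 16*l*m - 80*b - 64*b*m + 20*b*l*m + 16*b*l*m^2 + 16*b^2 + 24*b^2*m + 8*b^2*m^2 - 80*a + 20*a*l*m + 36*a*b + 24*a*b*m + 8*a*b*l + 7*a*b*l*m + 16*a^2 + 8*a^2*l)*x$1 + (32*b*m - 8*b*l*m^2 + 64*a - 16*a*l*m - 8*a*b*m + 2*a*b*l*m^2 - 16*a^2 + 4*a^2*l*m)*x$2 + (64*b - 48*b*l*m + 8*b*l^2*m^2 - 16*b^2 - 16*b^2*m + 4*b^2*l*m + 4*b^2*l*m^2 - 32*a*l + 8*a*l^2*m - 32*a*b - 8*a*b*l + 8*a*b*l*m + 2*a*b*l^2*m)*x$3,
    (- 64 + 32*l + 32*l*m + 48*b + 16*b*m - 8*b*l - 8*b*l*m - 8*b^2 - 4*b^2*m + 16*a + 8*a*l - 4*a*b - 2*a*b*l)*x$1 + (64 - 16*l*m - 16*b + 4*b*l*m - 16*a + 4*a*l*m + 4*a*b - a*b*l*m)*x$2 + (- 64*l + 16*l^2*m - 32*b + 16*b*l + 8*b*l*m - 4*b*l^2*m + 8*b^2 - 2*b^2*l*m)*x$3,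
    (- 64 - 96*m + 32*l*m + 32*l*m^2 + 16*b + 40*b*m + 16*b*m^2 - 16*a + 24*a*m + 16*a*l + 24*a*l*m + 12*a*b + 6*a*b*m + 8*a^2 + 4*a^2*l)*x$1 + (64*m - 16*l*m^2 + 32*a - 16*a*m - 8*a*l*m + 4*a*l*m^2 - 8*a^2 + 2*a^2*l*m)*x$2 + (64 - 80*l*m + 16*l^2*m^2 - 16*b - 32*b*m + 4*b*l*m + 8*b*l*m^2 - 16*a - 32*a*l + 4*a*l*m + 8*a*l^2*m - 12*a*b + 3*a*b*l*m)*x$3]"

lemma NN1:
  fixes a b l m :: complex and x :: "complex^3"
  shows "(64 - 16*l*m - 80*b - 64*b*m + 20*b*l*m + 16*b*l*m^2 + 16*b^2 + 24*b^2*m + 8*b^2*m^2 - 80*a + 20*a*l*m + 36*a*b + 24*a*b*m + 8*a*b*l + 7*a*b*l*m + 16*a^2 + 8*a^2*l)*((64 - 16*l*m - 80*b - 64*b*m + 20*b*l*m + 16*b*l*m^2 + 16*b^2 + 24*b^2*m + 8*b^2*m^2 - 80*a + 20*a*l*m + 36*a*b + 24*a*b*m + 8*a*b*l + 7*a*b*l*m + 16*a^2 + 8*a^2*l)*x$1 + (32*b*m - 8*b*l*m^2 + 64*a - 16*a*l*m - 8*a*b*m + 2*a*b*l*m^2 - 16*a^2 + 4*a^2*l*m)*x$2 + (64*b - 48*b*l*m + 8*b*l^2*m^2 - 16*b^2 - 16*b^2*m + 4*b^2*l*m + 4*b^2*l*m^2 - 32*a*l + 8*a*l^2*m - 32*a*b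 - 8*a*b*l + 8*a*b*l*m + 2*a*b*l^2*m)*x$3) + (32*b*m - 8*b*l*m^2 + 64*a - 16*a*l*m - 8*a*b*m + 2*a*b*l*m^2 - 16*a^2 + 4*a^2*l*m)*((- 64 + 32*l + 32*l*m + 48*b + 16*b*m - 8*b*l - 8*b*l*m - 8*b^2 - 4*b^2*m + 16*a + 8*a*l - 4*a*b - 2*a*b*l)*x$1 + (64 - 16*l*m - 16*b + 4*b*l*m - 16*a + 4*a*l*m + 4*a*b - a*b*l*m)*x$2 + (- 64*l + 16*l^2*m - 32*b + 16*b*l + 8*b*l*m - 4*b*l^2*m + 8*b^2 - 2*b^2*l*m)*x$3) + (64*b - 48*b*l*m + 8*b*l^2*m^2 - 16*b^2 - 16*b^2*m + 4*b^2*l*m + 4*b^2*l*m^2 - 32*a*l + 8*a*l^2*m - 32*a*b - 8*a*b*l + 8*a*b*l*m + 2*a*b*l^2*m)*((- 64 - 96*m + 32*l*m + 32*l*m^2 + 16*b + 40*b*m + 16*b*m^2 - 16*a + 24*a*m + 16*a*l + 24*a*l*m + 12*a*b + 6*a*b*m + 8*a^2 + 4*a^2*l)*x$1 + (64*m - 16*l*m^2 + 32*a - 16*a*m - 8*a*l*m + 4*a*l*m^2 - 8*a^2 + 2*a^2*l*m)*x$2 + (64 - 80*l*m + 16*l^2*m^2 - 16*b - 32*b*m + 4*b*l*m + 8*b*l*m^2 - 16*a - 32*a*l + 4*a*l*m + 8*a*l^2*m - 12*a*b + 3*a*b*l*m)*x$3) - ((4-a)*(4-b)*(4-l*m))^2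 * x$1 = (8-2*a-2*b-2*(l*m)-(a*l+b*m)) * ((- 1536*b - 2048*b*m + 896*b*l*m + 1024*b*l*m^2 - 128*b*l^2*m^2 - 128*b*l^2*m^3 + 896*b^2 + 1792*b^2*m + 768*b^2*m^2 - 224*b^2*l*m - 448*b^2*l*m^2 - 192*b^2*l*m^3 - 128*b^3 - 320*b^3*m - 256*b^3*m^2 - 64*b^3*m^3 - 1536*a + 512*a*l + 896*a*l*m - 128*a*l^2*m - 128*a*l^2*m^2 + 1792*a*b + 1792*a*b*m + 128*a*b*l - 192*a*b*l*m - 448*a*b*l*m^2 - 32*a*b*l^2*m - 64*a*b*l^2*m^2 - 352*a*b^2 - 640*a*b^2*m - 256*a*b^2*m^2 - 64*a*b^2*l - 136*a*b^2*l*m - 64*a*b^2*l*m^2 + 896*a^2 + 128*a^2*l - 224*a^2*l*m - 32*a^2*l^2*m - 352*a^2*b - 320*a^2*b*m - 96*a^2*b*l - 136*a^2*b*l*m - 8*a^2*b*l^2*m - 128*a^3 - 64*a^3*l)*x$1 + (1024*b*m - 512*b*l*m^2 + 64*b*l^2*m^3 - 256*b^2*m - 256*b^2*m^2 + 64*b^2*l*m^2 + 64*b^2*l*m^3 + 1024*a - 512*a*l*m + 64*a*l^2*m^2 - 256*a*b - 1024*a*b*m + 320*a*b*l*m^2 + 16*a*b*l^2*m^2 - 16*a*b*l^2*m^3 + 64*a*b^2*m + 64*a*b^2*m^2 - 16*a*b^2*l*m^2 - 16*a*b^2*l*m^3 - 768*a^2 + 256*a^2*l*m - 16*a^2*l^2*m^2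 + 64*a^2*b + 192*a^2*b*m - 48*a^2*b*l*m^2 - 4*a^2*b*l^2*m^2 + 128*a^3 - 32*a^3*l*m)*x$2 + (1024*b - 1536*b*l*m + 576*b*l^2*m^2 - 64*b*l^3*m^3 - 768*b^2 - 1024*b^2*m + 512*b^2*l*m + 640*b^2*l*m^2 - 80*b^2*l^2*m^2 - 96*b^2*l^2*m^3 + 128*b^3 + 256*b^3*m + 128*b^3*m^2 - 32*b^3*l*m - 64*b^3*l*m^2 - 32*b^3*l*m^3 - 1024*a*l + 512*a*l^2*m - 64*a*l^3*m^2 - 1280*a*b + 1024*a*b*l*m + 64*a*b*l^2*m - 176*a*b*l^2*m^2 - 16*a*b*l^3*m^2 + 320*a*b^2 + 384*a*b^2*m + 64*a*b^2*l - 96*a*b^2*l*m^2 - 16*a*b^2*l^2*m - 20*a*b^2*l^2*m^2 + 256*a^2*l - 64*a^2*l^2*m + 256*a^2*b + 64*a^2*b*l - 64*a^2*b*l*m - 16*a^2*b*l^2*m)*x$3)"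
  by algebra

lemma NN2:
  fixes a b l m :: complex and x :: "complex^3"
  shows "(- 64 + 32*l + 32*l*m + 48*b + 16*b*m - 8*b*l - 8*b*l*m - 8*b^2 - 4*b^2*m + 16*a + 8*a*l - 4*a*b - 2*a*b*l)*((64 - 16*l*m - 80*b - 64*b*m + 20*b*l*m + 16*b*l*m^2 + 16*b^2 + 24*b^2*m + 8*b^2*m^2 - 80*a + 20*a*l*m + 36*a*b + 24*a*b*m + 8*a*b*l + 7*a*b*l*m + 16*a^2 + 8*a^2*l)*x$1 + (32*b*m - 8*b*l*m^2 + 64*a - 16*a*l*m - 8*a*b*m + 2*a*b*l*m^2 - 16*a^2 + 4*a^2*l*m)*x$2 + (64*b - 48*b*l*m + 8*b*l^2*m^2 - 16*b^2 - 16*b^2*m + 4*b^2*l*m + 4*b^2*l*m^2 - 32*a*l + 8*a*l^2*m - 32*a*b - 8*a*b*l + 8*a*b*l*m + 2*a*b*l^2*m)*x$3) + (64 - 16*l*m - 16*b + 4*b*l*m - 16*a + 4*a*l*m + 4*a*b - a*b*l*m)*((- 64 + 32*l + 32*l*m + 48*b + 16*b*m - 8*b*l - 8*b*l*m - 8*b^2 - 4*b^2*m + 16*a + 8*a*l - 4*a*b - 2*a*b*l)*x$1 + (64 - 16*l*m - 16*b + 4*b*l*m - 16*a + 4*a*l*m + 4*a*b - a*b*l*m)*x$2 + (- 64*l + 16*l^2*m - 32*b + 16*b*l + 8*b*l*m - 4*b*l^2*m + 8*b^2 - 2*b^2*l*m)*x$3) + (- 64*l + 16*l^2*m - 32*b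 + 16*b*l + 8*b*l*m - 4*b*l^2*m + 8*b^2 - 2*b^2*l*m)*((- 64 - 96*m + 32*l*m + 32*l*m^2 + 16*b + 40*b*m + 16*b*m^2 - 16*a + 24*a*m + 16*a*l + 24*a*l*m + 12*a*b + 6*a*b*m + 8*a^2 + 4*a^2*l)*x$1 + (64*m - 16*l*m^2 + 32*a - 16*a*m - 8*a*l*m + 4*a*l*m^2 - 8*a^2 + 2*a^2*l*m)*x$2 + (64 - 80*l*m + 16*l^2*m^2 - 16*b - 32*b*m + 4*b*l*m + 8*b*l*m^2 - 16*a - 32*a*l + 4*a*l*m + 8*a*l^2*m - 12*a*b + 3*a*b*l*m)*x$3) - ((4-a)*(4-b)*(4-l*m))^2 * x$2 = (8-2*a-2*b-2*(l*m)-(a*l+b*m)) * ((- 1024 + 1024*l + 1280*l*m - 256*l^2*m - 256*l^2*m^2 + 1536*b + 1024*b*m - 512*b*l - 1024*b*l*m - 384*b*l*m^2 + 64*b*l^2*m + 64*b*l^2*m^2 - 576*b^2 - 640*b^2*m - 128*b^2*m^2 + 64*b^2*l + 176*b^2*l*m + 96*b^2*l*m^2 + 64*b^3 + 96*b^3*m + 32*b^3*m^2 + 768*a - 320*a*l*m - 64*a*l^2*m - 512*a*b - 256*a*b*m - 64*a*b*l + 16*a*b*l^2*m + 80*a*b^2 + 64*a*b^2*m + 16*a*b^2*l + 20*a*b^2*l*m - 128*a^2 - 64*a^2*l + 32*a^2*b + 16*a^2*b*l)*x$1 + (- 512*l*m + 128*l^2*m^2 - 512*b*m + 128*b*l*m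 + 128*b*l*m^2 - 32*b*l^2*m^2 + 128*b^2*m - 32*b^2*l*m^2 - 512*a + 256*a*l*m - 32*a*l^2*m^2 + 128*a*b + 128*a*b*m - 64*a*b*l*m - 32*a*b*l*m^2 + 8*a*b*l^2*m^2 - 32*a*b^2*m + 8*a*b^2*l*m^2 + 128*a^2 - 32*a^2*l*m - 32*a^2*b + 8*a^2*b*l*m)*x$2 + (- 1024*l + 768*l^2*m - 128*l^3*m^2 - 1024*b + 512*b*l + 1024*b*l*m - 256*b*l^2*m - 192*b*l^2*m^2 + 32*b*l^3*m^2 + 512*b^2 + 256*b^2*m - 64*b^2*l - 320*b^2*l*m - 64*b^2*l*m^2 + 16*b^2*l^2*m + 48*b^2*l^2*m^2 - 64*b^3 - 64*b^3*m + 16*b^3*l*m + 16*b^3*l*m^2 + 256*a*l - 64*a*l^2*m + 256*a*b - 64*a*b*l*m - 64*a*b^2 - 16*a*b^2*l + 16*a*b^2*l*m + 4*a*b^2*l^2*m)*x$3)"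
  by algebra

lemma NN3:
  fixes a b l m :: complex and x :: "complex^3"
  shows "(- 64 - 96*m + 32*l*m + 32*l*m^2 + 16*b + 40*b*m + 16*b*m^2 - 16*a + 24*a*m + 16*a*l + 24*a*l*m + 12*a*b + 6*a*b*m + 8*a^2 + 4*a^2*l)*((64 - 16*l*m - 80*b - 64*b*m + 20*b*l*m + 16*b*l*m^2 + 16*b^2 + 24*b^2*m + 8*b^2*m^2 - 80*a + 20*a*l*m + 36*a*b + 24*a*b*m + 8*a*b*l + 7*a*b*l*m + 16*a^2 + 8*a^2*l)*x$1 + (32*b*m - 8*b*l*m^2 + 64*a - 16*a*l*m - 8*a*b*m + 2*a*b*l*m^2 - 16*a^2 + 4*a^2*l*m)*x$2 + (64*b - 48*b*l*m + 8*b*l^2*m^2 - 16*b^2 - 16*b^2*m + 4*b^2*l*m + 4*b^2*l*m^2 - 32*a*l + 8*a*l^2*m - 32*a*b - 8*a*b*l + 8*a*b*l*m + 2*a*b*l^2*m)*x$3) + (64*m - 16*l*m^2 + 32*a - 16*a*m - 8*a*l*m + 4*a*l*m^2 - 8*a^2 + 2*a^2*l*m)*((- 64 + 32*l + 32*l*m + 48*b + 16*b*m - 8*b*l - 8*b*l*m - 8*b^2 - 4*b^2*m + 16*a + 8*a*l - 4*a*b - 2*a*b*l)*x$1 + (64 - 16*l*m - 16*b + 4*b*l*m - 16*a + 4*a*l*m + 4*a*b - a*b*l*m)*x$2 + (- 64*l + 16*l^2*m - 32*b + 16*b*l + 8*b*l*m - 4*b*l^2*m + 8*b^2 - 2*b^2*l*m)*x$3)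 + (64 - 80*l*m + 16*l^2*m^2 - 16*b - 32*b*m + 4*b*l*m + 8*b*l*m^2 - 16*a - 32*a*l + 4*a*l*m + 8*a*l^2*m - 12*a*b + 3*a*b*l*m)*((- 64 - 96*m + 32*l*m + 32*l*m^2 + 16*b + 40*b*m + 16*b*m^2 - 16*a + 24*a*m + 16*a*l + 24*a*l*m + 12*a*b + 6*a*b*m + 8*a^2 + 4*a^2*l)*x$1 + (64*m - 16*l*m^2 + 32*a - 16*a*m - 8*a*l*m + 4*a*l*m^2 - 8*a^2 + 2*a^2*l*m)*x$2 + (64 - 80*l*m + 16*l^2*m^2 - 16*b - 32*b*m + 4*b*l*m + 8*b*l*m^2 - 16*a - 32*a*l + 4*a*l*m + 8*a*l^2*m - 12*a*b + 3*a*b*l*m)*x$3) - ((4-a)*(4-b)*(4-l*m))^2 * x$3 = (8-2*a-2*b-2*(l*m)-(a*l+b*m)) * ((- 1024 - 2048*m + 1280*l*m + 1536*l*m^2 - 256*l^2*m^2 - 256*l^2*m^3 + 768*b + 2304*b*m + 1280*b*m^2 - 320*b*l*m - 768*b*l*m^2 - 384*b*l*m^3 - 128*b^2 - 448*b^2*m - 448*b^2*m^2 - 128*b^2*m^3 + 1280*a*m + 512*a*l + 640*a*l*m - 384*a*l*m^2 - 128*a*l^2*m - 192*a*l^2*m^2 + 384*a*b - 128*a*b*m - 320*a*b*m^2 - 128*a*b*l - 416*a*b*l*m - 256*a*b*l*m^2 - 96*a*b^2 - 144*a*b^2*m - 48*a*b^2*m^2 + 320*a^2 - 192*a^2*m -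 240*a^2*l*m - 32*a^2*l^2*m - 144*a^2*b - 112*a^2*b*m - 32*a^2*b*l - 36*a^2*b*l*m - 64*a^3 - 32*a^3*l)*x$1 + (1024*m - 768*l*m^2 + 128*l^2*m^3 - 256*b*m - 512*b*m^2 + 64*b*l*m^2 + 128*b*l*m^3 - 1024*a*m - 256*a*l*m + 384*a*l*m^2 + 64*a*l^2*m^2 - 32*a*l^2*m^3 - 128*a*b*m + 128*a*b*m^2 + 32*a*b*l*m^2 - 32*a*b*l*m^3 - 256*a^2 + 192*a^2*m + 128*a^2*l*m - 48*a^2*l*m^2 - 16*a^2*l^2*m^2 + 48*a^2*b*m - 12*a^2*b*l*m^2 + 64*a^3 - 16*a^3*l*m)*x$2 + (- 1536*l*m + 896*l^2*m^2 - 128*l^3*m^3 - 512*b - 1536*b*m + 512*b*l*m + 1152*b*l*m^2 - 96*b*l^2*m^2 - 192*b*l^2*m^3 + 128*b^2 + 384*b^2*m + 256*b^2*m^2 - 32*b^2*l*m - 96*b^2*l*m^2 - 64*b^2*l*m^3 - 512*a*l + 384*a*l*m + 384*a*l^2*m - 96*a*l^2*m^2 - 64*a*l^3*m^2 - 384*a*b + 384*a*b*m + 128*a*b*l + 512*a*b*l*m - 96*a*b*l*m^2 - 32*a*b*l^2*m - 104*a*b*l^2*m^2 + 96*a*b^2 + 96*a*b^2*m - 24*a*b^2*l*m - 24*a*b^2*l*m^2 + 128*a^2*l - 32*a^2*l^2*m + 128*a^2*b + 32*a^2*b*l - 32*a^2*b*l*m - 8*a^2*b*l^2*m)*x$3)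"
  by algebra

lemma Dlin: "D12 a b l (c *s x) = c *s D12 a b l x" "D13 a b m (c *s x) = c *s D13 a b m x"
  "D23 l m (c *s x) = c *s D23 l m x" "Nm a b l m (c *s x) = c *s Nm a b l m x"
  unfolding vec3_eq D12_def D13_def D23_def Nm_def by (simp_all add: algebra_simps)

lemma DN: "D13 a b m (D12 a b l (D23 l m x)) = Nm a b l m x"
  unfolding vec3_eq D12_def D13_def D23_def Nm_def by simp algebra

lemma NN: assumes "8-2*a-2*b-2*(l*m)-(a*l+b*m) = 0"
  shows "Nm a b l m (Nm a b l m x) = ((4-a)*(4-b)*(4-l*m))^2 *s x"
proof -
have "\<exists>Q. Nm a b l m (Nm a b l m x) $ 1 - ((4-a)*(4-b)*(4-l*m))^2 * x$1 = (8-2*a-2*b-2*(l*m)-(a*l+b*m)) * Q"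
    unfolding Nm_def vector_3 using NN1[where a=a and b=b and l=l and m=m and x=x] by blast
  then have "Nm a b l m (Nm a b l m x) $ 1 = ((4-a)*(4-b)*(4-l*m))^2 * x$1" using assms by auto
  moreover have "\<exists>Q. Nm a b l m (Nm a b l m x) $ 2 - ((4-a)*(4-b)*(4-l*m))^2 * x$2 = (8-2*a-2*b-2*(l*m)-(a*l+b*m)) * Q"
    unfolding Nm_def vector_3 using NN2[where a=a and b=b and l=l and m=m and x=x] by blast
  then have "Nm a b l m (Nm a b l m x) $ 2 = ((4-a)*(4-b)*(4-l*m))^2 * x$2" using assms by auto
  moreover have "\<exists>Q. Nm a b l m (Nm a b l m x) $ 3 - ((4-a)*(4-b)*(4-l*m))^2 * x$3 = (8-2*a-2*b-2*(l*m)-(a*l+b*m)) * Q"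
    unfolding Nm_def vector_3 using NN3[where a=a and b=b and l=l and m=m and x=x] by blast
  then have "Nm a b l m (Nm a b l m x) $ 3 = ((4-a)*(4-b)*(4-l*m))^2 * x$3" using assms by auto
  ultimately show ?thesis unfolding vec3_eq by simp
qed


lemma ne4:
  fixes k :: int and n p :: nat
  assumes n2: "n \<ge> 2" and pn: "p = 2*n" and g: "gcd k (int p) = 1"
  shows "complex_of_real (4 * (cos (pi * real_of_int k / real p))\<^sup>2) \<noteq> 4"
proof
  note tf = trig_facts[OF n2 pn g]
  assume "complex_of_real (4 * (cos (pi * real_of_int k / real p))\<^sup>2) = 4"
  then have "complex_of_real (4 * (cos (pi * real_of_int k / real p))\<^sup>2) = complex_of_real 4" by simp
  then have "4 * (cos (pi * real_of_int k / real p))\<^sup>2 = 4" using of_real_eq_iff by blast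
  then have "cos (pi * real_of_int k / real n) = 1" using tf(4) by simp
  then have "sin (pi * real_of_int k / real n) = 0" using sin_cos_squared_add[of "pi * real_of_int k / real n"] by simp
  then show False using tf(1) by simp
qed

lemma P_gen:
  fixes k :: int and n p :: nat and A :: "complex^3 \<Rightarrow> complex^3" and t :: complex and B :: "complex^3 \<Rightarrow> complex^3"
  assumes add: "\<And>x y. A (x + y) = A x + A y" and sc: "\<And>c x. A (c *s x) = c *s A x"
   and cub: "\<And>x. A (A (A x)) = (t+1) *s A (A x) - (t+1) *s A x + x"
   and n2: "n \<ge> 2" and pn: "p = 2*n" and g: "gcd k (int p) = 1"
   and tdef: "t = complex_of_real (4 * (cos (pi * real_of_int k / real p))\<^sup>2) - 2"
   and sig: "\<And>x. (2/(2-t)) *s A (A x) - (2*t/(2-t)) *s A x + (2/(2-t) - 1) *s x = B x"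
  shows "(A ^^ n) x = B x"
  using pow_half[OF add sc cub n2 pn g tdef] sig by simp

lemma P12:
  fixes k :: int and n p :: nat
  assumes "n \<ge> 2" "p = 2*n" "gcd k (int p) = 1"
    "a = complex_of_real (4 * (cos (pi * real_of_int k / real p))\<^sup>2)"
  shows "((refl_s1 a b \<circ> refl_s2 l) ^^ n) x = (1/(4-a)) *s D12 a b l x"
proof -
  have a4: "a \<noteq> 4" using ne4[OF assms(1-3)] assms(4) by simp
  have t: "a - 2 = complex_of_real (4 * (cos (pi * real_of_int k / real p))\<^sup>2) - 2" using assms(4) by simp
  show ?thesis
    by (rule P_gen[OF A12_props(1,2,3) assms(1-3) t A12_sig[OF a4]])
qed

lemma P13:
  fixes k :: int and n p :: nat
  assumes "n \<ge> 2" "p = 2*n" "gcd k (int p) = 1"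
    "b = complex_of_real (4 * (cos (pi * real_of_int k / real p))\<^sup>2)"
  shows "((refl_s1 a b \<circ> refl_s3 m) ^^ n) x = (1/(4-b)) *s D13 a b m x"
proof -
  have b4: "b \<noteq> 4" using ne4[OF assms(1-3)] assms(4) by simp
  have t: "b - 2 = complex_of_real (4 * (cos (pi * real_of_int k / real p))\<^sup>2) - 2" using assms(4) by simp
  show ?thesis
    by (rule P_gen[OF A13_props(1,2,3) assms(1-3) t A13_sig[OF b4]])
qed

lemma P23:
  fixes k :: int and n p :: nat
  assumes "n \<ge> 2" "p = 2*n" "gcd k (int p) = 1"
    "l*m = complex_of_real (4 * (cos (pi * real_of_int k / real p))\<^sup>2)"
  shows "((refl_s2 l \<circ> refl_s3 m) ^^ n) x = (1/(4-l*m)) *s D23 l m x"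
proof -
  have g4: "l*m \<noteq> 4" using ne4[OF assms(1-3)] assms(4) by simp
  have t: "l*m - 2 = complex_of_real (4 * (cos (pi * real_of_int k / real p))\<^sup>2) - 2" using assms(4) by simp
  show ?thesis
    by (rule P_gen[OF A23_props(1,2,3) assms(1-3) t A23_sig[OF g4]])
qed

lemma final_w:
  assumes a4: "a \<noteq> 4" and b4: "b \<noteq> 4" and g4: "l*m \<noteq> 4"
    and De: "8-2*a-2*b-2*(l*m)-(a*l+b*m) = 0"
    and W: "\<And>x. w x = (1/((4-a)*(4-b)*(4-l*m))) *s Nm a b l m x"
  shows "w \<circ> w = id"
proof -
  have dd0: "(4-a)*(4-b)*(4-l*m) \<noteq> 0" using a4 b4 g4 by simp
  have "w (w x) = x" for x
    unfolding W Dlin NN[OF De] using dd0 by (simp add: power2_eq_square)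
  then show ?thesis by auto
qed

theorem corollary3:
  fixes p q r p1 q1 r1 :: nat and k1 k2 k3 :: int and l m :: complex
  assumes "p \<ge> 3" and "q \<ge> 3" and "r \<ge> 3"
    and "p = 2 * p1" and "q = 2 * q1" and "r = 2 * r1"
    and "gcd k1 (int p) = 1" and "gcd k2 (int q) = 1" and "gcd k3 (int r) = 1"
    and "\<alpha> = complex_of_real (4 * (cos (pi * real_of_int k1 / real p))\<^sup>2)"
    and "\<beta> = complex_of_real (4 * (cos (pi * real_of_int k2 / real q))\<^sup>2)"
    and "\<gamma> = complex_of_real (4 * (cos (pi * real_of_int k3 / real r))\<^sup>2)"
    and "l * m = \<gamma>"
    and "refl_Delta \<alpha> \<beta> \<gamma> l m = 0"
  shows "(let s1 = refl_s1 \<alpha> \<beta>; s2 = refl_s2 l; s3 = refl_s3 m;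
              w = ((s1 \<circ> s3) ^^ q1) \<circ> ((s1 \<circ> s2) ^^ p1) \<circ> ((s2 \<circ> s3) ^^ r1)
          in w \<circ> w = id)"
proof -
  have p2: "p1 \<ge> 2" and q2: "q1 \<ge> 2" and r2: "r1 \<ge> 2" using assms(1-6) by auto
  have a4: "\<alpha> \<noteq> 4" using ne4[OF p2 assms(4) assms(7)] assms(10) by simp
  have b4: "\<beta> \<noteq> 4" using ne4[OF q2 assms(5) assms(8)] assms(11) by simp
  have g4: "l*m \<noteq> 4" using ne4[OF r2 assms(6) assms(9)] assms(12,13) by simp
  have gm: "l*m = complex_of_real (4 * (cos (pi * real_of_int k3 / real r))\<^sup>2)" using assms(12,13) by simp
  note Q12 = P12[OF p2 assms(4) assms(7) assms(10)]
  note Q13 = P13[OF q2 assms(5) assms(8) assms(11)]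
  note Q23 = P23[OF r2 assms(6) assms(9) gm]
  have De: "8-2*\<alpha>-2*\<beta>-2*(l*m)-(\<alpha>*l+\<beta>*m) = 0" using assms(13,14) by (simp add: refl_Delta_def)
  have "(((refl_s1 \<alpha> \<beta> \<circ> refl_s3 m) ^^ q1) \<circ> ((refl_s1 \<alpha> \<beta> \<circ> refl_s2 l) ^^ p1) \<circ> ((refl_s2 l \<circ> refl_s3 m) ^^ r1)) \<circ>
        (((refl_s1 \<alpha> \<beta> \<circ> refl_s3 m) ^^ q1) \<circ> ((refl_s1 \<alpha> \<beta> \<circ> refl_s2 l) ^^ p1) \<circ> ((refl_s2 l \<circ> refl_s3 m) ^^ r1)) = id"
    by (rule final_w[OF a4 b4 g4 De]) (simp add: Q12 Q13 Q23 Dlin DN[symmetric])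
  then show ?thesis unfolding Let_def .
qed

end
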